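(* Let $\Delta$ be a finite domain, $\mathcal{L}$ a first-order language, $R$ a binary and $A$ a unary predicate of $\mathcal{L}$, $k$ an integer with $0\le k\le|\Delta|$, $\Gamma$ a first-order sentence over $\mathcal{L}$, and $\Upsilon$ a conjunction (over $\mathcal{L}$) of constraints of the forms $\forall x\,\exists_{=c}y:\psi(x,y)$, $\exists_{=c}x\,\forall y:\psi(x,y)$ and cardinality constraints. Let $U^R$ (unary) and $B^R$ (binary) be new predicates not in $\mathcal{L}$, with all their weights equal to $1$, and let $\Omega_{\mathrm{ext}}$ be the set of possible worlds on $\Delta$ w.r.t. $\mathcal{L}$ extended by $U^R,B^R$. Define $\Phi=\Phi_1\wedge\Phi_2\wedge\Phi_3\wedge\Phi_4$ with $\Phi_1=\forall x\,\exists_{=k}y:B^R(x,y)$, $\Phi_2=(|U^R|=k)$, $\Phi_3=\forall x\forall y:(A(x)\wedge B^R(x,y))\Rightarrow U^R(y)$, $\Phi_4=\forall x\forall y:\neg A(x)\Rightarrow(R(x,y)\Leftrightarrow B^R(x,y))$. Then for all weight functions $w,\overline{w}$, $$\mathrm{WFOMC}\big(\Gamma\wedge\Upsilon\wedge(\forall x:A(x)\vee(\exists_{=k}y:R(x,y))),w,\overline{w},\Delta\big)=\binom{|\Delta|}{k}^{-1}\mathrm{WFOMC}(\Gamma\wedge\Upsilon\wedge\Phi,w,\overline{w},\Omega_{\mathrm{ext}}),$$ where the left-hand side is taken over all possible worlds on $\Delta$ w.r.t. $\mathcal{L}$.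
   Context: A possible world on $\Delta$ is a set of ground atoms over the language's predicates and $\Delta$. $N(R,\omega)$ is the number of ground atoms of $R$ true in $\omega$. For a set $\Omega$ of possible worlds, $\mathrm{WFOMC}(\Gamma,w,\overline{w},\Omega)=\sum_{\omega\in\Omega,\,\omega\models\Gamma}\prod_{R} w(R)^{N(R,\omega)}\overline{w}(R)^{|\Delta|^{\mathrm{arity}(R)}-N(R,\omega)}$, the product ranging over the predicates of the language of $\Omega$; $\mathrm{WFOMC}(\cdot,\cdot,\cdot,\Delta)$ uses all possible worlds on $\Delta$. A cardinality constraint $|S|=c$ holds iff $N(S,\omega)=c$. $\exists_{=k}y\,\psi(y)$ holds iff exactly $k$ distinct elements of $\Delta$ satisfy $\psi$. *)

theory Defs
  imports Complex_Main
begin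

datatype 'p fm =
    Tru
  | Atom 'p "nat list"
  | Eq nat nat
  | Neg "'p fm"
  | Conj "'p fm" "'p fm"
  | Disj "'p fm" "'p fm"
  | Imp "'p fm" "'p fm"
  | Iff "'p fm" "'p fm"
  | All nat "'p fm"
  | Ex nat "'p fm"
  | ExEq nat nat "'p fm"
  | Card 'p nat

type_synonym ('p, 'd) world = "('p \<times> 'd list) set"

definition N :: "'p \<Rightarrow> ('p, 'd) world \<Rightarrow> nat" where
  "N P \<omega> = card {xs. (P, xs) \<in> \<omega>}"

fun sat :: "'d set \<Rightarrow> ('p, 'd) world \<Rightarrow> (nat \<Rightarrow> 'd) \<Rightarrow> 'p fm \<Rightarrow> bool" where
  "sat D \<omega> \<sigma> Tru = True"
| "sat D \<omega> \<sigma> (Atom P xs) = ((P, map \<sigma> xs) \<in> \<omega>)"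
| "sat D \<omega> \<sigma> (Eq x y) = (\<sigma> x = \<sigma> y)"
| "sat D \<omega> \<sigma> (Neg \<phi>) = (\<not> sat D \<omega> \<sigma> \<phi>)"
| "sat D \<omega> \<sigma> (Conj \<phi> \<psi>) = (sat D \<omega> \<sigma> \<phi> \<and> sat D \<omega> \<sigma> \<psi>)"
| "sat D \<omega> \<sigma> (Disj \<phi> \<psi>) = (sat D \<omega> \<sigma> \<phi> \<or> sat D \<omega> \<sigma> \<psi>)"
| "sat D \<omega> \<sigma> (Imp \<phi> \<psi>) = (sat D \<omega> \<sigma> \<phi> \<longrightarrow> sat D \<omega> \<sigma> \<psi>)"
| "sat D \<omega> \<sigma> (Iff \<phi> \<psi>) = (sat D \<omega> \<sigma> \<phi> \<longleftrightarrow> sat D \<omega> \<sigma> \<psi>)"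
| "sat D \<omega> \<sigma> (All x \<phi>) = (\<forall>d\<in>D. sat D \<omega> (\<sigma>(x := d)) \<phi>)"
| "sat D \<omega> \<sigma> (Ex x \<phi>) = (\<exists>d\<in>D. sat D \<omega> (\<sigma>(x := d)) \<phi>)"
| "sat D \<omega> \<sigma> (ExEq c x \<phi>) = (card {d\<in>D. sat D \<omega> (\<sigma>(x := d)) \<phi>} = c)"
| "sat D \<omega> \<sigma> (Card P c) = (N P \<omega> = c)"

text \<open>A sentence is true in a world (free of free variables, so the assignment is irrelevant).\<close>
definition models :: "'d set \<Rightarrow> ('p, 'd) world \<Rightarrow> 'p fm \<Rightarrow> bool" where
  "models D \<omega> \<phi> = (\<forall>\<sigma>. sat D \<omega> \<sigma> \<phi>)"

fun fv :: "'p fm \<Rightarrow> nat set" where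
  "fv Tru = {}"
| "fv (Atom P xs) = set xs"
| "fv (Eq x y) = {x, y}"
| "fv (Neg \<phi>) = fv \<phi>"
| "fv (Conj \<phi> \<psi>) = fv \<phi> \<union> fv \<psi>"
| "fv (Disj \<phi> \<psi>) = fv \<phi> \<union> fv \<psi>"
| "fv (Imp \<phi> \<psi>) = fv \<phi> \<union> fv \<psi>"
| "fv (Iff \<phi> \<psi>) = fv \<phi> \<union> fv \<psi>"
| "fv (All x \<phi>) = fv \<phi> - {x}"
| "fv (Ex x \<phi>) = fv \<phi> - {x}"
| "fv (ExEq c x \<phi>) = fv \<phi> - {x}"
| "fv (Card P c) = {}"

fun over :: "('p \<Rightarrow> nat) \<Rightarrow> 'p set \<Rightarrow> 'p fm \<Rightarrow> bool" where
  "over ar L Tru = True"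
| "over ar L (Atom P xs) = (P \<in> L \<and> length xs = ar P)"
| "over ar L (Eq x y) = True"
| "over ar L (Neg \<phi>) = over ar L \<phi>"
| "over ar L (Conj \<phi> \<psi>) = (over ar L \<phi> \<and> over ar L \<psi>)"
| "over ar L (Disj \<phi> \<psi>) = (over ar L \<phi> \<and> over ar L \<psi>)"
| "over ar L (Imp \<phi> \<psi>) = (over ar L \<phi> \<and> over ar L \<psi>)"
| "over ar L (Iff \<phi> \<psi>) = (over ar L \<phi> \<and> over ar L \<psi>)"
| "over ar L (All x \<phi>) = over ar L \<phi>"
| "over ar L (Ex x \<phi>) = over ar L \<phi>"
| "over ar L (ExEq c x \<phi>) = over ar L \<phi>"
| "over ar L (Card P c) = (P \<in> L)"

fun first_order :: "'p fm \<Rightarrow> bool" where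
  "first_order Tru = True"
| "first_order (Atom P xs) = True"
| "first_order (Eq x y) = True"
| "first_order (Neg \<phi>) = first_order \<phi>"
| "first_order (Conj \<phi> \<psi>) = (first_order \<phi> \<and> first_order \<psi>)"
| "first_order (Disj \<phi> \<psi>) = (first_order \<phi> \<and> first_order \<psi>)"
| "first_order (Imp \<phi> \<psi>) = (first_order \<phi> \<and> first_order \<psi>)"
| "first_order (Iff \<phi> \<psi>) = (first_order \<phi> \<and> first_order \<psi>)"
| "first_order (All x \<phi>) = first_order \<phi>"
| "first_order (Ex x \<phi>) = first_order \<phi>"
| "first_order (ExEq c x \<phi>) = False"
| "first_order (Card P c) = False"

definition upsilon_constraint :: "('p \<Rightarrow> nat) \<Rightarrow> 'p set \<Rightarrow> 'p fm \<Rightarrow> bool" where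
  "upsilon_constraint ar L \<phi> \<longleftrightarrow>
     (\<exists>x y c \<psi>. x \<noteq> y \<and> first_order \<psi> \<and> over ar L \<psi> \<and> fv \<psi> \<subseteq> {x, y} \<and>
        (\<phi> = All x (ExEq c y \<psi>) \<or> \<phi> = ExEq c x (All y \<psi>)))
   \<or> (\<exists>P c. P \<in> L \<and> \<phi> = Card P c)"

fun conj_list :: "'p fm list \<Rightarrow> 'p fm" where
  "conj_list [] = Tru"
| "conj_list (\<phi> # \<phi>s) = Conj \<phi> (conj_list \<phi>s)"

definition ground_atoms :: "('p \<Rightarrow> nat) \<Rightarrow> 'p set \<Rightarrow> 'd set \<Rightarrow> ('p \<times> 'd list) set" where
  "ground_atoms ar L D = {(P, xs). P \<in> L \<and> length xs = ar P \<and> set xs \<subseteq> D}"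

definition possible_worlds :: "('p \<Rightarrow> nat) \<Rightarrow> 'p set \<Rightarrow> 'd set \<Rightarrow> ('p, 'd) world set" where
  "possible_worlds ar L D = Pow (ground_atoms ar L D)"

definition weight :: "('p \<Rightarrow> nat) \<Rightarrow> 'p set \<Rightarrow> 'd set \<Rightarrow> ('p \<Rightarrow> real) \<Rightarrow> ('p \<Rightarrow> real)
    \<Rightarrow> ('p, 'd) world \<Rightarrow> real" where
  "weight ar L D w wb \<omega> = (\<Prod>P\<in>L. w P ^ N P \<omega> * wb P ^ (card D ^ ar P - N P \<omega>))"

text \<open>WFOMC(Gamma, w, wbar, Omega) where Omega is the set of possible worlds on D
  w.r.t. language L; the product ranges over the predicates of L.\<close>
definition WFOMC :: "('p \<Rightarrow> nat) \<Rightarrow> 'p set \<Rightarrow> 'd set \<Rightarrow> 'p fm \<Rightarrow> ('p \<Rightarrow> real) \<Rightarrow> ('p \<Rightarrow> real) \<Rightarrow> real" where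
  "WFOMC ar L D \<Gamma> w wb =
     (\<Sum>\<omega>\<in>{\<omega>\<in>possible_worlds ar L D. models D \<omega> \<Gamma>}. weight ar L D w wb \<omega>)"

end

theory Submission imports Defs begin

lemma sat_cong:
  "over ar L \<phi> \<Longrightarrow> (\<forall>P\<in>L. \<forall>xs. ((P,xs)\<in>\<omega>) = ((P,xs)\<in>\<omega>')) \<Longrightarrow> sat D \<omega> \<sigma> \<phi> = sat D \<omega>' \<sigma> \<phi>"
proof (induction \<phi> arbitrary: \<sigma>)
  case (Card P c)
  then have "{xs. (P, xs) \<in> \<omega>} = {xs. (P, xs) \<in> \<omega>'}" by auto
  then show ?case by (simp add: N_def)
qed auto

lemma models_cong:
  "over ar L \<phi> \<Longrightarrow> (\<forall>P\<in>L. \<forall>xs. ((P,xs)\<in>\<omega>) = ((P,xs)\<in>\<omega>')) \<Longrightarrow> models D \<omega> \<phi> = models D \<omega>' \<phi>"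
  unfolding models_def using sat_cong by blast

lemma over_conj_list:
  "\<forall>\<phi>\<in>set \<Upsilon>s. upsilon_constraint ar L \<phi> \<Longrightarrow> over ar L (conj_list \<Upsilon>s)"
  by (induction \<Upsilon>s) (auto simp: upsilon_constraint_def)

lemma models_Conj: "models D \<omega> (Conj a b) = (models D \<omega> a \<and> models D \<omega> b)"
  by (auto simp: models_def)

lemma finite_ground_atoms:
  assumes "finite L" "finite D" shows "finite (ground_atoms ar L D)"
proof -
  have "ground_atoms ar L D \<subseteq> Sigma L (\<lambda>P. {xs. set xs \<subseteq> D \<and> length xs = ar P})"
    by (auto simp: ground_atoms_def)
  moreover have "finite (Sigma L (\<lambda>P. {xs. set xs \<subseteq> D \<and> length xs = ar P}))"
    using assms by (intro finite_SigmaI finite_lists_length_eq) auto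
  ultimately show ?thesis by (rule finite_subset)
qed

lemma modelsL:
  assumes "x \<noteq> y"
  shows "models D \<omega> (All x (Disj (Atom A [x]) (ExEq k y (Atom R [x, y]))))
     = (\<forall>d\<in>D. (A,[d])\<in>\<omega> \<or> card {e\<in>D. (R,[d,e])\<in>\<omega>} = k)"
  using assms by (simp add: models_def)

lemma modelsR:
  assumes "x \<noteq> y"
  shows "models D \<omega> (Conj (All x (ExEq k y (Atom B [x, y])))
              (Conj (Card U k)
              (Conj (All x (All y (Imp (Conj (Atom A [x]) (Atom B [x, y])) (Atom U [y]))))
                    (All x (All y (Imp (Neg (Atom A [x])) (Iff (Atom R [x, y]) (Atom B [x, y]))))))))
    = ((\<forall>d\<in>D. card {e\<in>D. (B,[d,e])\<in>\<omega>} = k) \<and> N U \<omega> = k \<and>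
       (\<forall>d\<in>D. \<forall>e\<in>D. (A,[d])\<in>\<omega> \<and> (B,[d,e])\<in>\<omega> \<longrightarrow> (U,[e])\<in>\<omega>) \<and>
       (\<forall>d\<in>D. \<forall>e\<in>D. (A,[d])\<notin>\<omega> \<longrightarrow> ((R,[d,e])\<in>\<omega> \<longleftrightarrow> (B,[d,e])\<in>\<omega>)))"
  using assms by (simp add: models_def)

theorem lemma4:
  fixes ar :: "'p \<Rightarrow> nat" and L :: "'p set" and \<Delta> :: "'d set"
    and R A U B :: 'p and k :: nat and \<Gamma> :: "'p fm" and \<Upsilon>s :: "'p fm list"
    and w wb :: "'p \<Rightarrow> real" and x y :: nat
  assumes "finite \<Delta>" and "finite L"
    and "R \<in> L" and "ar R = 2" and "A \<in> L" and "ar A = 1"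
    and "k \<le> card \<Delta>"
    and "first_order \<Gamma>" and "over ar L \<Gamma>" and "fv \<Gamma> = {}"
    and "\<forall>\<phi>\<in>set \<Upsilon>s. upsilon_constraint ar L \<phi>"
    and "U \<notin> L" and "B \<notin> L" and "U \<noteq> B" and "ar U = 1" and "ar B = 2"
    and "w U = 1" and "wb U = 1" and "w B = 1" and "wb B = 1"
    and "x \<noteq> y"
  shows "WFOMC ar L \<Delta>
           (Conj \<Gamma> (Conj (conj_list \<Upsilon>s)
              (All x (Disj (Atom A [x]) (ExEq k y (Atom R [x, y])))))) w wb
       = inverse (real (card \<Delta> choose k)) *
         WFOMC ar (L \<union> {U, B}) \<Delta>
           (Conj \<Gamma> (Conj (conj_list \<Upsilon>s)
              (Conj (All x (ExEq k y (Atom B [x, y])))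
              (Conj (Card U k)
              (Conj (All x (All y (Imp (Conj (Atom A [x]) (Atom B [x, y])) (Atom U [y]))))
                    (All x (All y (Imp (Neg (Atom A [x])) (Iff (Atom R [x, y]) (Atom B [x, y]))))))))))
           w wb"
proof -
  let ?n = "card \<Delta>"
  define \<phi>L where "\<phi>L = Conj \<Gamma> (Conj (conj_list \<Upsilon>s)
              (All x (Disj (Atom A [x]) (ExEq k y (Atom R [x, y])))))"
  define \<Phi> where "\<Phi> = Conj (All x (ExEq k y (Atom B [x, y])))
              (Conj (Card U k)
              (Conj (All x (All y (Imp (Conj (Atom A [x]) (Atom B [x, y])) (Atom U [y]))))
                    (All x (All y (Imp (Neg (Atom A [x])) (Iff (Atom R [x, y]) (Atom B [x, y])))))))"
  define \<phi>R where "\<phi>R = Conj \<Gamma> (Conj (conj_list \<Upsilon>s) \<Phi>)"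
  define L' where "L' = L \<union> {U, B}"
  define S where "S = {\<omega>\<in>possible_worlds ar L \<Delta>. models \<Delta> \<omega> \<phi>L}"
  define T where "T = {\<omega>\<in>possible_worlds ar L' \<Delta>. models \<Delta> \<omega> \<phi>R}"
  define r where "r = (\<lambda>\<omega>'::('p,'d) world. {a\<in>\<omega>'. fst a \<in> L})"
  define ext where "ext = (\<lambda>\<omega>::('p,'d) world. \<lambda>V. \<omega> \<union> (\<lambda>u. (U,[u])) ` V \<union>
      {(B,[a,b]) | a b. a\<in>\<Delta> \<and> b\<in>\<Delta> \<and> (if (A,[a])\<in>\<omega> then b\<in>V else (R,[a,b])\<in>\<omega>)})"
  define K where "K = {V. V \<subseteq> \<Delta> \<and> card V = k}"
  note fin = assms(1,2)
  have oG: "over ar L \<Gamma>" by fact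
  have oU: "over ar L (conj_list \<Upsilon>s)" using assms(11) by (rule over_conj_list)
  have UB: "U \<notin> L" "B \<notin> L" "U \<noteq> B" "B \<noteq> U" using assms by auto
  have AR: "A \<noteq> U" "A \<noteq> B" "R \<noteq> U" "R \<noteq> B" using assms by auto
  have mL: "models \<Delta> \<omega> \<phi>L = (models \<Delta> \<omega> \<Gamma> \<and> models \<Delta> \<omega> (conj_list \<Upsilon>s) \<and>
      (\<forall>d\<in>\<Delta>. (A,[d])\<in>\<omega> \<or> card {e\<in>\<Delta>. (R,[d,e])\<in>\<omega>} = k))" for \<omega>
    unfolding \<phi>L_def models_Conj modelsL[OF assms(21)] by simp
  have mR: "models \<Delta> \<omega> \<phi>R = (models \<Delta> \<omega> \<Gamma> \<and> models \<Delta> \<omega> (conj_list \<Upsilon>s) \<and>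
      ((\<forall>d\<in>\<Delta>. card {e\<in>\<Delta>. (B,[d,e])\<in>\<omega>} = k) \<and> N U \<omega> = k \<and>
       (\<forall>d\<in>\<Delta>. \<forall>e\<in>\<Delta>. (A,[d])\<in>\<omega> \<and> (B,[d,e])\<in>\<omega> \<longrightarrow> (U,[e])\<in>\<omega>) \<and>
       (\<forall>d\<in>\<Delta>. \<forall>e\<in>\<Delta>. (A,[d])\<notin>\<omega> \<longrightarrow> ((R,[d,e])\<in>\<omega> \<longleftrightarrow> (B,[d,e])\<in>\<omega>))))" for \<omega>
    unfolding \<phi>R_def \<Phi>_def models_Conj[of _ _ \<Gamma>] models_Conj[of _ _ "conj_list \<Upsilon>s"]
      modelsR[OF assms(21)] by simp
  have pw: "\<omega> \<in> possible_worlds ar M \<Delta> \<longleftrightarrow> (\<forall>P xs. (P,xs)\<in>\<omega> \<longrightarrow> P\<in>M \<and> length xs = ar P \<and> set xs \<subseteq> \<Delta>)"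
    for \<omega> :: "('p,'d) world" and M
    unfolding possible_worlds_def ground_atoms_def by auto
  have finS: "finite S" and finT: "finite T"
    unfolding S_def T_def L'_def possible_worlds_def
    using finite_ground_atoms[of L \<Delta> ar] finite_ground_atoms[of "L \<union> {U,B}" \<Delta> ar] fin by auto
  have rL: "\<forall>P\<in>L. \<forall>xs. ((P,xs)\<in>r \<omega>') = ((P,xs)\<in>\<omega>')" for \<omega>' unfolding r_def by auto
  have rS: "r ` T \<subseteq> S"
  proof
    fix \<omega> assume "\<omega> \<in> r ` T"
    then obtain \<omega>' where \<omega>': "\<omega>' \<in> T" "\<omega> = r \<omega>'" by auto
    have agr: "\<forall>P\<in>L. \<forall>xs. ((P,xs)\<in>\<omega>) = ((P,xs)\<in>\<omega>')" using \<omega>'(2) rL by simp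
    have p1: "\<omega> \<in> possible_worlds ar L \<Delta>" using \<omega>' unfolding T_def r_def pw by auto
    have m: "models \<Delta> \<omega>' \<phi>R" using \<omega>' T_def by auto
    have "models \<Delta> \<omega> \<Gamma>" "models \<Delta> \<omega> (conj_list \<Upsilon>s)"
      using m mR models_cong[OF oG agr] models_cong[OF oU agr] by auto
    moreover have "\<forall>d\<in>\<Delta>. (A,[d])\<in>\<omega> \<or> card {e\<in>\<Delta>. (R,[d,e])\<in>\<omega>} = k"
    proof
      fix d assume d: "d \<in> \<Delta>"
      show "(A,[d])\<in>\<omega> \<or> card {e\<in>\<Delta>. (R,[d,e])\<in>\<omega>} = k"
      proof (cases "(A,[d])\<in>\<omega>")
        case False
        then have "(A,[d])\<notin>\<omega>'" using agr assms(5) by auto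
        then have "{e\<in>\<Delta>. (R,[d,e])\<in>\<omega>} = {e\<in>\<Delta>. (B,[d,e])\<in>\<omega>'}"
          using m mR d agr assms(3) by auto
        then show ?thesis using m mR d by auto
      qed simp
    qed
    ultimately show "\<omega> \<in> S" using p1 unfolding S_def mL by auto
  qed
  have wt: "weight ar L' \<Delta> w wb \<omega>' = weight ar L \<Delta> w wb (r \<omega>')" for \<omega>'
  proof -
    have "weight ar L' \<Delta> w wb \<omega>' = (\<Prod>P\<in>L. w P ^ N P \<omega>' * wb P ^ (card \<Delta> ^ ar P - N P \<omega>')) *
       (\<Prod>P\<in>{U,B}. w P ^ N P \<omega>' * wb P ^ (card \<Delta> ^ ar P - N P \<omega>'))"
      unfolding weight_def L'_def using fin UB by (intro prod.union_disjoint) auto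
    also have "(\<Prod>P\<in>{U,B}. w P ^ N P \<omega>' * wb P ^ (card \<Delta> ^ ar P - N P \<omega>')) = 1"
      using UB assms(17-20) by simp
    also have "(\<Prod>P\<in>L. w P ^ N P \<omega>' * wb P ^ (card \<Delta> ^ ar P - N P \<omega>')) = weight ar L \<Delta> w wb (r \<omega>')"
      unfolding weight_def
    proof (rule prod.cong)
      fix P assume "P \<in> L"
      then have "{xs. (P,xs)\<in>\<omega>'} = {xs. (P,xs)\<in>r \<omega>'}" using rL by auto
      then show "w P ^ N P \<omega>' * wb P ^ (card \<Delta> ^ ar P - N P \<omega>') =
         w P ^ N P (r \<omega>') * wb P ^ (card \<Delta> ^ ar P - N P (r \<omega>'))" by (simp add: N_def)
    qed simp
    finally show ?thesis by simp
  qed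
  have fiber: "card {\<omega>'\<in>T. r \<omega>' = \<omega>} = ?n choose k" if \<omega>S: "\<omega> \<in> S" for \<omega>
  proof -
    have \<omega>pw: "\<forall>P xs. (P,xs)\<in>\<omega> \<longrightarrow> P\<in>L \<and> length xs = ar P \<and> set xs \<subseteq> \<Delta>"
      using \<omega>S unfolding S_def pw by auto
    have \<omega>m: "models \<Delta> \<omega> \<phi>L" using \<omega>S S_def by auto
    have extL: "\<forall>P\<in>L. \<forall>xs. ((P,xs)\<in>ext \<omega> V) = ((P,xs)\<in>\<omega>)" for V
      unfolding ext_def using UB by auto
    have extU: "(U,xs) \<in> ext \<omega> V \<longleftrightarrow> (\<exists>u\<in>V. xs = [u])" for V xs
      unfolding ext_def using UB \<omega>pw by auto
    have extB: "(B,xs) \<in> ext \<omega> V \<longleftrightarrow> (\<exists>a b. xs = [a,b] \<and> a\<in>\<Delta> \<and> b\<in>\<Delta> \<and>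
         (if (A,[a])\<in>\<omega> then b\<in>V else (R,[a,b])\<in>\<omega>))" for V xs
      unfolding ext_def using UB \<omega>pw by auto
    have inj: "inj_on (ext \<omega>) K"
    proof
      fix V1 V2 assume "ext \<omega> V1 = ext \<omega> V2"
      then have "{u. (U,[u]) \<in> ext \<omega> V1} = {u. (U,[u]) \<in> ext \<omega> V2}" by simp
      then show "V1 = V2" unfolding extU by simp
    qed
    have img: "{\<omega>'\<in>T. r \<omega>' = \<omega>} = ext \<omega> ` K"
    proof
      show "ext \<omega> ` K \<subseteq> {\<omega>'\<in>T. r \<omega>' = \<omega>}"
      proof
        fix \<omega>' assume "\<omega>' \<in> ext \<omega> ` K"
        then obtain V where V: "V \<subseteq> \<Delta>" "card V = k" and \<omega>'d: "\<omega>' = ext \<omega> V"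
          unfolding K_def by auto
        have finV: "finite V" using V fin finite_subset by blast
        have agr: "\<forall>P\<in>L. \<forall>xs. ((P,xs)\<in>\<omega>) = ((P,xs)\<in>\<omega>')" using extL \<omega>'d by simp
        have r1: "r \<omega>' = \<omega>"
          unfolding r_def \<omega>'d ext_def using UB \<omega>pw by auto
        have p1: "\<omega>' \<in> possible_worlds ar L' \<Delta>"
          unfolding pw L'_def \<omega>'d ext_def using \<omega>pw V assms(15,16) by auto
        have A1: "(A,[d]) \<in> \<omega>' \<longleftrightarrow> (A,[d]) \<in> \<omega>" for d using agr assms(5) by auto
        have R1: "(R,xs) \<in> \<omega>' \<longleftrightarrow> (R,xs) \<in> \<omega>" for xs using agr assms(3) by auto
        have c1: "\<forall>d\<in>\<Delta>. card {e\<in>\<Delta>. (B,[d,e])\<in>\<omega>'} = k"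
        proof
          fix d assume d: "d \<in> \<Delta>"
          have "{e\<in>\<Delta>. (B,[d,e])\<in>\<omega>'} = {e\<in>\<Delta>. if (A,[d])\<in>\<omega> then e\<in>V else (R,[d,e])\<in>\<omega>}"
            using d unfolding \<omega>'d extB by auto
          also have "card \<dots> = k"
          proof (cases "(A,[d])\<in>\<omega>")
            case True
            then have "{e\<in>\<Delta>. if (A,[d])\<in>\<omega> then e\<in>V else (R,[d,e])\<in>\<omega>} = V" using V by auto
            then show ?thesis using V by simp
          next
            case False
            then show ?thesis using \<omega>m mL d by auto
          qed
          finally show "card {e\<in>\<Delta>. (B,[d,e])\<in>\<omega>'} = k" .
        qed
        have "{xs. (U,xs)\<in>\<omega>'} = (\<lambda>u. [u]) ` V" unfolding \<omega>'d extU by auto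
        then have c2: "N U \<omega>' = k" unfolding N_def using V by (simp add: card_image inj_on_def)
        have c3: "\<forall>d\<in>\<Delta>. \<forall>e\<in>\<Delta>. (A,[d])\<in>\<omega>' \<and> (B,[d,e])\<in>\<omega>' \<longrightarrow> (U,[e])\<in>\<omega>'"
          using A1 unfolding \<omega>'d extB extU by auto
        have c4: "\<forall>d\<in>\<Delta>. \<forall>e\<in>\<Delta>. (A,[d])\<notin>\<omega>' \<longrightarrow> ((R,[d,e])\<in>\<omega>' \<longleftrightarrow> (B,[d,e])\<in>\<omega>')"
          using A1 R1 unfolding \<omega>'d extB by auto
        have "models \<Delta> \<omega>' \<Gamma>" "models \<Delta> \<omega>' (conj_list \<Upsilon>s)"
          using \<omega>m mL models_cong[OF oG agr] models_cong[OF oU agr] by auto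
        then have "models \<Delta> \<omega>' \<phi>R" using mR c1 c2 c3 c4 by simp
        then show "\<omega>' \<in> {\<omega>'\<in>T. r \<omega>' = \<omega>}" using p1 r1 T_def by auto
      qed
    next
      show "{\<omega>'\<in>T. r \<omega>' = \<omega>} \<subseteq> ext \<omega> ` K"
      proof
        fix \<omega>' assume "\<omega>' \<in> {\<omega>'\<in>T. r \<omega>' = \<omega>}"
        then have \<omega>'T: "\<omega>' \<in> T" and r1: "r \<omega>' = \<omega>" by auto
        have \<omega>'pw: "\<forall>P xs. (P,xs)\<in>\<omega>' \<longrightarrow> P\<in>L' \<and> length xs = ar P \<and> set xs \<subseteq> \<Delta>"
          using \<omega>'T unfolding T_def pw by auto
        have m: "models \<Delta> \<omega>' \<phi>R" using \<omega>'T T_def by auto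
        have agr: "\<forall>P\<in>L. \<forall>xs. ((P,xs)\<in>\<omega>) = ((P,xs)\<in>\<omega>')" using r1 rL by auto
        define V where "V = {u. (U,[u]) \<in> \<omega>'}"
        have V\<Delta>: "V \<subseteq> \<Delta>" unfolding V_def using \<omega>'pw by fastforce
        have finV: "finite V" using V\<Delta> fin finite_subset by blast
        have Uxs: "(U,xs)\<in>\<omega>' \<longleftrightarrow> (\<exists>u\<in>V. xs = [u])" for xs
        proof
          assume h: "(U,xs)\<in>\<omega>'"
          then have "length xs = 1" using \<omega>'pw assms(15) by auto
          then obtain u where "xs = [u]" by (metis One_nat_def length_0_conv length_Suc_conv)
          then show "\<exists>u\<in>V. xs = [u]" using h V_def by auto
        qed (auto simp: V_def)
        have "{xs. (U,xs)\<in>\<omega>'} = (\<lambda>u. [u]) ` V" using Uxs by auto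
        then have cV: "card V = k" using m mR unfolding N_def by (simp add: card_image inj_on_def)
        have A1: "(A,[d]) \<in> \<omega>' \<longleftrightarrow> (A,[d]) \<in> \<omega>" for d using agr assms(5) by auto
        have R1: "(R,xs) \<in> \<omega>' \<longleftrightarrow> (R,xs) \<in> \<omega>" for xs using agr assms(3) by auto
        have Bab: "(B,[a,b])\<in>\<omega>' \<longleftrightarrow> (if (A,[a])\<in>\<omega> then b\<in>V else (R,[a,b])\<in>\<omega>)"
          if ab: "a\<in>\<Delta>" "b\<in>\<Delta>" for a b
        proof (cases "(A,[a])\<in>\<omega>")
          case True
          have sub: "{e\<in>\<Delta>. (B,[a,e])\<in>\<omega>'} \<subseteq> V"
            using m mR True A1 ab V_def by auto
          have "card {e\<in>\<Delta>. (B,[a,e])\<in>\<omega>'} = k" using m mR ab by auto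
          then have "{e\<in>\<Delta>. (B,[a,e])\<in>\<omega>'} = V" using card_subset_eq[OF finV sub] cV by simp
          then show ?thesis using True ab by auto
        next
          case False
          then show ?thesis using m mR A1 R1 ab by auto
        qed
        have "\<omega>' = ext \<omega> V"
        proof (rule set_eqI)
          fix a :: "'p \<times> 'd list"
          obtain P xs where a: "a = (P,xs)" by fastforce
          show "a \<in> \<omega>' \<longleftrightarrow> a \<in> ext \<omega> V"
          proof (cases "P \<in> L")
            case True then show ?thesis using a agr extL by auto
          next
            case notL: False
            show ?thesis
            proof (cases "P = U")
              case True then show ?thesis using a Uxs extU by auto
            next
              case notU: False
              show ?thesis
              proof (cases "P = B")
                case True
                show ?thesis
                proof
                  assume h: "a \<in> \<omega>'"
                  then have "length xs = 2" "set xs \<subseteq> \<Delta>" using \<omega>'pw a True assms(16) by auto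
                  then obtain a1 b1 where "xs = [a1,b1]" "a1\<in>\<Delta>" "b1\<in>\<Delta>"
                    by (auto simp: numeral_2_eq_2 length_Suc_conv)
                  then show "a \<in> ext \<omega> V" using h Bab a True extB by auto
                next
                  assume "a \<in> ext \<omega> V"
                  then show "a \<in> \<omega>'" using a True extB Bab by auto
                qed
              next
                case False
                then have "a \<notin> \<omega>'" using a \<omega>'pw notL notU L'_def by auto
                moreover have "a \<notin> ext \<omega> V" using a \<omega>pw notL notU False unfolding ext_def by auto
                ultimately show ?thesis by simp
              qed
            qed
          qed
        qed
        then show "\<omega>' \<in> ext \<omega> ` K" using V\<Delta> cV K_def by auto
      qed
    qed
    have "card {\<omega>'\<in>T. r \<omega>' = \<omega>} = card K" using img inj card_image by metis
    also have "card K = ?n choose k" unfolding K_def using n_subsets[OF fin(1)] by simp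
    finally show ?thesis .
  qed
  have "WFOMC ar L' \<Delta> \<phi>R w wb = (\<Sum>\<omega>'\<in>T. weight ar L \<Delta> w wb (r \<omega>'))"
    unfolding WFOMC_def T_def using wt by simp
  also have "\<dots> = (\<Sum>\<omega>\<in>S. \<Sum>\<omega>'\<in>{\<omega>'\<in>T. r \<omega>' = \<omega>}. weight ar L \<Delta> w wb (r \<omega>'))"
    using sum.group[OF finT finS rS, of "\<lambda>\<omega>'. weight ar L \<Delta> w wb (r \<omega>')"] by simp
  also have "\<dots> = (\<Sum>\<omega>\<in>S. real (?n choose k) * weight ar L \<Delta> w wb \<omega>)"
  proof (rule sum.cong)
    fix \<omega> assume "\<omega> \<in> S"
    have "(\<Sum>\<omega>'\<in>{\<omega>'\<in>T. r \<omega>' = \<omega>}. weight ar L \<Delta> w wb (r \<omega>')) =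
          (\<Sum>\<omega>'\<in>{\<omega>'\<in>T. r \<omega>' = \<omega>}. weight ar L \<Delta> w wb \<omega>)" by (rule sum.cong) auto
    then show "(\<Sum>\<omega>'\<in>{\<omega>'\<in>T. r \<omega>' = \<omega>}. weight ar L \<Delta> w wb (r \<omega>')) =
        real (?n choose k) * weight ar L \<Delta> w wb \<omega>" using fiber[OF \<open>\<omega> \<in> S\<close>] by simp
  qed simp
  also have "\<dots> = real (?n choose k) * WFOMC ar L \<Delta> \<phi>L w wb"
    unfolding WFOMC_def S_def by (simp add: sum_distrib_left)
  finally have eq: "WFOMC ar L' \<Delta> \<phi>R w wb = real (?n choose k) * WFOMC ar L \<Delta> \<phi>L w wb" .
  have pos: "real (?n choose k) \<noteq> 0" using assms(7) by simp
  show ?thesis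
    unfolding \<phi>L_def[symmetric] \<Phi>_def[symmetric] \<phi>R_def[symmetric] L'_def[symmetric] eq
    using pos by simp
qed

end
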